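(* Let $\mathcal E$ be a Hilbert space, $U\in\mathcal B(\mathcal E)$ a unitary and $P\in\mathcal B(\mathcal E)$ an orthogonal projection, and let $\pi(z)=U(P^\perp+zP)$ for $z\in\mathbb D$, where $P^\perp=I-P$. Then $1$ is an eigenvalue of $\pi(z)$ for some $z\in\mathbb D$ if and only if there is a non-zero $x\in\operatorname{ran}(P^\perp)$ with $Ux=x$.
   Context: $\mathbb D$ denotes the open unit disc. *)

theory Defs
  imports "HOL-Analysis.Analysis"
begin

text \<open>A complex Hilbert space is modelled as a real Hilbert space
(type class real_inner + complete_space) equipped with an orthogonal
complex structure J (multiplication by the imaginary unit).
The complex inner product is then  x \<bullet> y + i (x \<bullet> J y)  (up to convention).\<close>

definition complex_structure :: "('a::real_inner \<Rightarrow> 'a) \<Rightarrow> bool" where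
  "complex_structure J \<longleftrightarrow> linear J \<and> (\<forall>x. J (J x) = - x) \<and> (\<forall>x y. J x \<bullet> J y = x \<bullet> y)"

definition cscale :: "('a::real_vector \<Rightarrow> 'a) \<Rightarrow> complex \<Rightarrow> 'a \<Rightarrow> 'a" where
  "cscale J z x = Re z *\<^sub>R x + Im z *\<^sub>R J x"

definition bounded_clinear_op :: "('a::real_normed_vector \<Rightarrow> 'a) \<Rightarrow> ('a \<Rightarrow> 'a) \<Rightarrow> bool" where
  "bounded_clinear_op J T \<longleftrightarrow> bounded_linear T \<and> (\<forall>x. T (J x) = J (T x))"

definition unitary_op :: "('a::real_inner \<Rightarrow> 'a) \<Rightarrow> ('a \<Rightarrow> 'a) \<Rightarrow> bool" where
  "unitary_op J U \<longleftrightarrow> bounded_clinear_op J U \<and> (\<forall>x y. U x \<bullet> U y = x \<bullet> y) \<and> surj U"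

definition orth_proj :: "('a::real_inner \<Rightarrow> 'a) \<Rightarrow> ('a \<Rightarrow> 'a) \<Rightarrow> bool" where
  "orth_proj J P \<longleftrightarrow> bounded_clinear_op J P \<and> (\<forall>x. P (P x) = P x) \<and> (\<forall>x y. P x \<bullet> y = x \<bullet> P y)"

definition pencil :: "('a::real_vector \<Rightarrow> 'a) \<Rightarrow> ('a \<Rightarrow> 'a) \<Rightarrow> ('a \<Rightarrow> 'a) \<Rightarrow> complex \<Rightarrow> 'a \<Rightarrow> 'a" where
  "pencil J U P z x = U ((x - P x) + cscale J z (P x))"

end

theory Submission
  imports Defs
begin

theorem lemma2p3:
  fixes J U P :: "'a::{real_inner, complete_space} \<Rightarrow> 'a"
  assumes "complex_structure J"
    and "unitary_op J U"
    and "orth_proj J P"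
  shows "(\<exists>z. norm z < 1 \<and> (\<exists>x. x \<noteq> 0 \<and> pencil J U P z x = x))
     \<longleftrightarrow> (\<exists>x. x \<noteq> 0 \<and> x \<in> range (\<lambda>y. y - P y) \<and> U x = x)"
proof -
  have linJ: "linear J" and JJ: "\<And>x. J (J x) = - x" and Jin: "\<And>x y. J x \<bullet> J y = x \<bullet> y"
    using assms(1) unfolding complex_structure_def by auto
  have linP: "linear P" and PP: "\<And>x. P (P x) = P x" and Psa: "\<And>x y. P x \<bullet> y = x \<bullet> P y"
    and PJ: "\<And>x. P (J x) = J (P x)"
    using assms(3) unfolding orth_proj_def bounded_clinear_op_def bounded_linear_def by auto
  have Uin: "\<And>x y. U x \<bullet> U y = x \<bullet> y"
    using assms(2) unfolding unitary_op_def by auto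
  have J0: "J 0 = 0" using linJ linear_0 by blast
  have P0: "\<And>y. P (y - P y) = 0" using linP PP by (simp add: linear_diff)
  show ?thesis
  proof
    assume "\<exists>z. norm z < 1 \<and> (\<exists>x. x \<noteq> 0 \<and> pencil J U P z x = x)"
    then obtain z x where z: "norm z < 1" and x0: "x \<noteq> 0" and px: "pencil J U P z x = x" by blast
    define a where "a = x - P x"
    define b where "b = P x"
    define w where "w = cscale J z b"
    have Ux: "U (a + w) = x" using px unfolding pencil_def a_def b_def w_def by simp
    have Pa: "P a = 0" unfolding a_def by (rule P0)
    have ab: "a \<bullet> b = 0" unfolding b_def using Psa[of x a] Pa
      by (metis inner_commute inner_zero_left)
    have aJb: "a \<bullet> J b = 0"
    proof -
      have "P (J b) = J b" unfolding b_def using PJ PP by metis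
      hence "a \<bullet> J b = a \<bullet> P (J b)" by simp
      also have "\<dots> = P a \<bullet> J b" using Psa by simp
      finally show ?thesis using Pa by simp
    qed
    have bJb: "b \<bullet> J b = 0"
    proof -
      have "b \<bullet> J b = J b \<bullet> J (J b)" using Jin by simp
      also have "\<dots> = - (J b \<bullet> b)" using JJ by simp
      finally show ?thesis by (simp add: inner_commute)
    qed
    have JbJb: "J b \<bullet> J b = b \<bullet> b" using Jin by simp
    have xx: "x \<bullet> x = a \<bullet> a + b \<bullet> b"
    proof -
      have "x = a + b" unfolding a_def b_def by simp
      hence "x \<bullet> x = (a + b) \<bullet> (a + b)" by simp
      also have "\<dots> = a \<bullet> a + b \<bullet> b + 2 * (a \<bullet> b)"
        by (simp add: inner_add_left inner_add_right inner_commute)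
      finally show ?thesis using ab by simp
    qed
    have aw: "a \<bullet> w = 0" unfolding w_def cscale_def
      by (simp add: inner_add_right ab aJb)
    have ww: "w \<bullet> w = (Re z ^ 2 + Im z ^ 2) * (b \<bullet> b)"
    proof -
      have "w \<bullet> w = Re z * Re z * (b \<bullet> b) + Im z * Im z * (J b \<bullet> J b)
          + 2 * Re z * Im z * (b \<bullet> J b)"
        unfolding w_def cscale_def
        by (simp add: inner_add_left inner_add_right inner_commute algebra_simps)
      thus ?thesis using bJb JbJb by (simp add: power2_eq_square algebra_simps)
    qed
    have "x \<bullet> x = (a + w) \<bullet> (a + w)" using Uin[of "a+w" "a+w"] Ux by simp
    also have "\<dots> = a \<bullet> a + w \<bullet> w + 2 * (a \<bullet> w)"
      by (simp add: inner_add_left inner_add_right inner_commute)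
    finally have "b \<bullet> b = (Re z ^ 2 + Im z ^ 2) * (b \<bullet> b)" using xx aw ww by simp
    moreover have "Re z ^ 2 + Im z ^ 2 < 1"
    proof -
      have "norm z ^ 2 < 1" using z by (simp add: power_less_one_iff)
      thus ?thesis using cmod_power2[of z] by simp
    qed
    ultimately have "b \<bullet> b = 0"
    proof -
      assume h1: "b \<bullet> b = (Re z ^ 2 + Im z ^ 2) * (b \<bullet> b)" and h2: "Re z ^ 2 + Im z ^ 2 < 1"
      have "(1 - (Re z ^ 2 + Im z ^ 2)) * (b \<bullet> b) = 0" using h1 by (simp add: algebra_simps)
      thus ?thesis using h2 by simp
    qed
    hence b0: "b = 0" by simp
    have "w = 0" unfolding w_def cscale_def b0 J0 by simp
    hence "U a = x" using Ux by simp
    moreover have "a = x" unfolding a_def using b0 b_def by simp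
    ultimately show "\<exists>x. x \<noteq> 0 \<and> x \<in> range (\<lambda>y. y - P y) \<and> U x = x"
    proof (intro exI conjI)
      show "a \<noteq> 0" using x0 \<open>a = x\<close> by simp
      show "a \<in> range (\<lambda>y. y - P y)" unfolding a_def by blast
      show "U a = a" using \<open>U a = x\<close> \<open>a = x\<close> by simp
    qed
  next
    assume "\<exists>x. x \<noteq> 0 \<and> x \<in> range (\<lambda>y. y - P y) \<and> U x = x"
    then obtain x where x0: "x \<noteq> 0" and xr: "x \<in> range (\<lambda>y. y - P y)" and Ux: "U x = x" by blast
    have "P x = 0" using xr P0 by auto
    hence "pencil J U P 0 x = x" unfolding pencil_def cscale_def using Ux by simp
    thus "\<exists>z. norm z < 1 \<and> (\<exists>x. x \<noteq> 0 \<and> pencil J U P z x = x)" using x0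
      by (metis norm_zero zero_less_one)
  qed
qed

end
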